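(* Assume every node of $G$ belongs to at least one $h$-clique. Let $f^*$ be any maximum flow in $\mathcal{H}$. Then in the residual graph $\mathcal{H}_{f^*}$ there is a directed path from $t$ to every node $v\in V$.
   Context: Let $G=(V,E)$ be a finite simple undirected graph and $h\ge2$. An $h$-clique is a set of $h$ pairwise adjacent nodes; $\mu_h(G[W])$ counts $h$-cliques inside $W$; for nonempty $W$, $\rho_h(W)=\mu_h(G[W])/|W|$; $\rho_h^*=\max_{\emptyset\ne W\subseteq V}\rho_h(W)$; $deg_G(v,h)$ is the number of $h$-cliques containing $v$; $\Lambda$ is the set of $(h-1)$-cliques of $G$ contained in some $h$-clique. Flow network $\mathcal{H}=(V_\mathcal{H},E_\mathcal{H},c)$: $V_\mathcal{H}=V\cup\Lambda\cup\{s,t\}$; for $v\in V$: arcs $(s,v)$ cap. $deg_G(v,h)$, $(v,t)$ cap. $h\rho_h^*$, $(v,s),(t,v)$ cap. $0$; for $\lambda\in\Lambda$, $v\in\lambda$: $(\lambda,v)$ cap. $+\infty$, $(v,\lambda)$ cap. $0$; for $\lambda\in\Lambda$, $v\in V$ with $\lambda\cup\{v\}$ an $h$-clique: $(v,\lambda)$ cap. $1$, $(\lambda,v)$ cap. $0$; no other arcs. A flow $f$ satisfies $f(u,v)\le c(u,v)$, $f(v,u)=-f(u,v)$, conservation at nodes other than $s,t$; value $\sum_v f(s,v)$. The residual graph $\mathcal{H}_{f}$ has an arc $(u,v)$ whenever $(u,v)\in E_\mathcal{H}$ and $c(u,v)-f(u,v)>0$. *)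

theory Defs
  imports "HOL-Library.Extended_Real"
begin

text \<open>Simple graph: finite vertex set V, adjacency relation adj (assumed symmetric and
irreflexive in the theorem). An h-clique of G[W] is a set of h pairwise adjacent nodes of W.\<close>

definition is_clique :: "('a \<Rightarrow> 'a \<Rightarrow> bool) \<Rightarrow> 'a set \<Rightarrow> nat \<Rightarrow> 'a set \<Rightarrow> bool" where
  "is_clique adj W h K \<longleftrightarrow> K \<subseteq> W \<and> finite K \<and> card K = h \<and>
     (\<forall>x\<in>K. \<forall>y\<in>K. x \<noteq> y \<longrightarrow> adj x y)"

definition mu :: "('a \<Rightarrow> 'a \<Rightarrow> bool) \<Rightarrow> nat \<Rightarrow> 'a set \<Rightarrow> nat" where
  "mu adj h W = card {K. is_clique adj W h K}"

definition rho :: "('a \<Rightarrow> 'a \<Rightarrow> bool) \<Rightarrow> nat \<Rightarrow> 'a set \<Rightarrow> real" where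
  "rho adj h W = real (mu adj h W) / real (card W)"

definition rho_star :: "('a \<Rightarrow> 'a \<Rightarrow> bool) \<Rightarrow> 'a set \<Rightarrow> nat \<Rightarrow> real" where
  "rho_star adj V h = Max {rho adj h W | W. W \<subseteq> V \<and> W \<noteq> {}}"

definition clique_deg :: "('a \<Rightarrow> 'a \<Rightarrow> bool) \<Rightarrow> 'a set \<Rightarrow> nat \<Rightarrow> 'a \<Rightarrow> nat" where
  "clique_deg adj V h v = card {K. is_clique adj V h K \<and> v \<in> K}"

definition Lambda :: "('a \<Rightarrow> 'a \<Rightarrow> bool) \<Rightarrow> 'a set \<Rightarrow> nat \<Rightarrow> 'a set set" where
  "Lambda adj V h = {L. is_clique adj V (h - 1) L \<and> (\<exists>K. is_clique adj V h K \<and> L \<subseteq> K)}"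

datatype 'a fnode = Src | Snk | VN 'a | LN "'a set"

definition HV :: "('a \<Rightarrow> 'a \<Rightarrow> bool) \<Rightarrow> 'a set \<Rightarrow> nat \<Rightarrow> 'a fnode set" where
  "HV adj V h = {Src, Snk} \<union> VN ` V \<union> LN ` Lambda adj V h"

definition HE :: "('a \<Rightarrow> 'a \<Rightarrow> bool) \<Rightarrow> 'a set \<Rightarrow> nat \<Rightarrow> ('a fnode \<times> 'a fnode) set" where
  "HE adj V h =
     {(Src, VN v) | v. v \<in> V} \<union> {(VN v, Snk) | v. v \<in> V} \<union>
     {(VN v, Src) | v. v \<in> V} \<union> {(Snk, VN v) | v. v \<in> V} \<union>
     {(LN L, VN v) | L v. L \<in> Lambda adj V h \<and> v \<in> L} \<union>
     {(VN v, LN L) | L v. L \<in> Lambda adj V h \<and> v \<in> L} \<union>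
     {(VN v, LN L) | L v. L \<in> Lambda adj V h \<and> v \<in> V \<and> is_clique adj V h (insert v L)} \<union>
     {(LN L, VN v) | L v. L \<in> Lambda adj V h \<and> v \<in> V \<and> is_clique adj V h (insert v L)}"

text \<open>Capacities; pairs that are not arcs (and the reverse arcs) get capacity 0.\<close>
fun cap :: "('a \<Rightarrow> 'a \<Rightarrow> bool) \<Rightarrow> 'a set \<Rightarrow> nat \<Rightarrow> 'a fnode \<Rightarrow> 'a fnode \<Rightarrow> ereal" where
  "cap adj V h Src (VN v) = (if v \<in> V then ereal (real (clique_deg adj V h v)) else 0)"
| "cap adj V h (VN v) Snk = (if v \<in> V then ereal (real h * rho_star adj V h) else 0)"
| "cap adj V h (LN L) (VN v) = (if L \<in> Lambda adj V h \<and> v \<in> L then \<infinity> else 0)"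
| "cap adj V h (VN v) (LN L) =
     (if L \<in> Lambda adj V h \<and> v \<in> V \<and> is_clique adj V h (insert v L) then 1 else 0)"
| "cap adj V h _ _ = 0"

definition is_flow :: "('a \<Rightarrow> 'a \<Rightarrow> bool) \<Rightarrow> 'a set \<Rightarrow> nat \<Rightarrow> ('a fnode \<Rightarrow> 'a fnode \<Rightarrow> real) \<Rightarrow> bool" where
  "is_flow adj V h f \<longleftrightarrow>
     (\<forall>u\<in>HV adj V h. \<forall>w\<in>HV adj V h. ereal (f u w) \<le> cap adj V h u w) \<and>
     (\<forall>u\<in>HV adj V h. \<forall>w\<in>HV adj V h. f w u = - f u w) \<and>
     (\<forall>u\<in>HV adj V h - {Src, Snk}. (\<Sum>w\<in>HV adj V h. f u w) = 0)"

definition flow_value :: "('a \<Rightarrow> 'a \<Rightarrow> bool) \<Rightarrow> 'a set \<Rightarrow> nat \<Rightarrow> ('a fnode \<Rightarrow> 'a fnode \<Rightarrow> real) \<Rightarrow> real" where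
  "flow_value adj V h f = (\<Sum>v\<in>VN ` V. f Src v)"

definition is_max_flow :: "('a \<Rightarrow> 'a \<Rightarrow> bool) \<Rightarrow> 'a set \<Rightarrow> nat \<Rightarrow> ('a fnode \<Rightarrow> 'a fnode \<Rightarrow> real) \<Rightarrow> bool" where
  "is_max_flow adj V h f \<longleftrightarrow> is_flow adj V h f \<and>
     (\<forall>g. is_flow adj V h g \<longrightarrow> flow_value adj V h g \<le> flow_value adj V h f)"

definition residual :: "('a \<Rightarrow> 'a \<Rightarrow> bool) \<Rightarrow> 'a set \<Rightarrow> nat \<Rightarrow> ('a fnode \<Rightarrow> 'a fnode \<Rightarrow> real) \<Rightarrow> ('a fnode \<times> 'a fnode) set" where
  "residual adj V h f = {(u, w). (u, w) \<in> HE adj V h \<and> cap adj V h u w - ereal (f u w) > 0}"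

end

theory Submission
  imports Defs
begin

lemma cap_nonzero_HE: "cap adj V h u w \<noteq> 0 \<Longrightarrow> (u, w) \<in> HE adj V h"
  by (cases u; cases w) (auto simp: HE_def split: if_splits)

lemma HE_sym: "(u, w) \<in> HE adj V h \<Longrightarrow> (w, u) \<in> HE adj V h"
  unfolding HE_def by blast

lemma cap_nonneg: "rho_star adj V h \<ge> 0 \<Longrightarrow> 0 \<le> cap adj V h u w"
  by (cases u; cases w) auto

lemma ereal_not_pos: "\<not> (c - ereal r > 0) \<Longrightarrow> c \<le> ereal r"
  by (cases c) auto

lemma sum_neg_aux:
  fixes g :: "'b \<Rightarrow> real"
  assumes "finite A" "a \<in> A" "\<forall>x\<in>A. g x \<le> 0" "g a < 0"
  shows "sum g A < 0"
proof -
  have "sum g A = g a + sum g (A - {a})" using assms by (simp add: sum.remove)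
  moreover have "sum g (A - {a}) \<le> 0" using assms by (intro sum_nonpos) auto
  ultimately show ?thesis using assms by simp
qed

lemma finite_Lambda: "finite V \<Longrightarrow> finite (Lambda adj V h)"
  by (rule finite_subset[of _ "Pow V"]) (auto simp: Lambda_def is_clique_def)

lemma finite_HV: "finite V \<Longrightarrow> finite (HV adj V h)"
  by (simp add: HV_def finite_Lambda)

lemma deg_pos:
  assumes "finite V" "is_clique adj V h K" "v \<in> K"
  shows "clique_deg adj V h v \<ge> 1"
proof -
  have "finite {K. is_clique adj V h K \<and> v \<in> K}"
    by (rule finite_subset[of _ "Pow V"]) (auto simp: is_clique_def assms)
  moreover have "K \<in> {K. is_clique adj V h K \<and> v \<in> K}" using assms by auto
  ultimately have "card {K. is_clique adj V h K \<and> v \<in> K} \<noteq> 0" by auto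
  thus ?thesis by (simp add: clique_deg_def)
qed

lemma rho_star_pos:
  assumes "finite V" "is_clique adj V h K" "v \<in> K" "h \<ge> 1"
  shows "rho_star adj V h > 0"
proof -
  have KV: "K \<subseteq> V" "finite K" "card K = h" using assms by (auto simp: is_clique_def)
  have "finite {K'. is_clique adj K h K'}"
    by (rule finite_subset[of _ "Pow K"]) (auto simp: is_clique_def KV)
  moreover have "K \<in> {K'. is_clique adj K h K'}" using assms by (auto simp: is_clique_def)
  ultimately have "card {K'. is_clique adj K h K'} \<noteq> 0" by auto
  hence mu: "mu adj h K \<ge> 1" by (simp add: mu_def)
  have r: "rho adj h K > 0" using mu KV assms(4) by (simp add: rho_def)
  have fin: "finite {rho adj h W | W. W \<subseteq> V \<and> W \<noteq> {}}"
  proof -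
    have "{rho adj h W | W. W \<subseteq> V \<and> W \<noteq> {}} = rho adj h ` {W. W \<subseteq> V \<and> W \<noteq> {}}" by auto
    moreover have "finite {W. W \<subseteq> V \<and> W \<noteq> {}}" using assms(1) by simp
    ultimately show ?thesis by simp
  qed
  have "rho adj h K \<in> {rho adj h W | W. W \<subseteq> V \<and> W \<noteq> {}}" using KV assms(3) by blast
  hence "rho adj h K \<le> rho_star adj V h" unfolding rho_star_def using fin by (rule Max_ge[rotated])
  thus ?thesis using r by simp
qed

theorem lemma5:
  fixes adj :: "'a \<Rightarrow> 'a \<Rightarrow> bool" and V :: "'a set" and h :: nat
    and f :: "'a fnode \<Rightarrow> 'a fnode \<Rightarrow> real"
  assumes "finite V"
    and "\<And>x y. adj x y \<Longrightarrow> adj y x"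
    and "\<And>x. \<not> adj x x"
    and "h \<ge> 2"
    and "\<forall>v\<in>V. \<exists>K. is_clique adj V h K \<and> v \<in> K"
    and "is_max_flow adj V h f"
  shows "\<forall>v\<in>V. (Snk, VN v) \<in> (residual adj V h f)\<^sup>+"
proof (rule ballI, rule ccontr)
  fix v assume vV: "v \<in> V" and nr: "(Snk, VN v) \<notin> (residual adj V h f)\<^sup>+"
  define R where "R = residual adj V h f"
  define HVs where "HVs = HV adj V h"
  define T where "T = insert Snk {x \<in> HVs. (Snk, x) \<in> R\<^sup>+}"
  define U where "U = HVs - T"
  have flow: "is_flow adj V h f" and maxf: "\<And>g. is_flow adj V h g \<Longrightarrow> flow_value adj V h g \<le> flow_value adj V h f"
    using assms(6) by (auto simp: is_max_flow_def)
  have capf: "\<And>u w. u \<in> HVs \<Longrightarrow> w \<in> HVs \<Longrightarrow> ereal (f u w) \<le> cap adj V h u w"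
    and antif: "\<And>u w. u \<in> HVs \<Longrightarrow> w \<in> HVs \<Longrightarrow> f w u = - f u w"
    and consf: "\<And>u. u \<in> HVs - {Src, Snk} \<Longrightarrow> (\<Sum>w\<in>HVs. f u w) = 0"
    using flow unfolding is_flow_def HVs_def by blast+
  obtain K where K: "is_clique adj V h K" "v \<in> K" using assms(5) vV by blast
  have rpos: "rho_star adj V h > 0" using rho_star_pos[OF assms(1) K] assms(4) by simp
  have capnn: "\<And>u w. 0 \<le> cap adj V h u w" using cap_nonneg[of adj V h] rpos by simp
  have degv: "clique_deg adj V h v \<ge> 1" using deg_pos[OF assms(1) K] .
  have fin: "finite HVs" using finite_HV[OF assms(1)] by (simp add: HVs_def)
  have SrcH: "Src \<in> HVs" and SnkH: "Snk \<in> HVs" and vH: "VN v \<in> HVs" using vV by (auto simp: HVs_def HV_def)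
  have TH: "T \<subseteq> HVs" using SnkH by (auto simp: T_def)
  have vU: "VN v \<in> U" using vH nr by (auto simp: U_def T_def R_def)
  have closed: "(x, w) \<notin> R" if "x \<in> T" "w \<in> U" for x w
  proof
    assume xw: "(x, w) \<in> R"
    have "(Snk, w) \<in> R\<^sup>+"
    proof (cases "x = Snk")
      case True thus ?thesis using xw by auto
    next
      case False
      hence "(Snk, x) \<in> R\<^sup>+" using that by (auto simp: T_def)
      thus ?thesis using xw by (rule trancl_into_trancl)
    qed
    thus False using that by (auto simp: U_def T_def)
  qed
  have caple: "cap adj V h x w \<le> ereal (f x w)" if "x \<in> T" "w \<in> U" for x w
  proof (cases "(x, w) \<in> HE adj V h")
    case True
    hence "\<not> (cap adj V h x w - ereal (f x w) > 0)" using closed[OF that] by (auto simp: R_def residual_def)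
    thus ?thesis by (rule ereal_not_pos)
  next
    case False
    have xH: "x \<in> HVs" and wH: "w \<in> HVs" using that TH by (auto simp: U_def)
    have c1: "cap adj V h x w = 0" using False cap_nonzero_HE by blast
    have "(w, x) \<notin> HE adj V h" using False HE_sym by blast
    hence "cap adj V h w x = 0" using cap_nonzero_HE by blast
    hence "f w x \<le> 0" using capf[OF wH xH] by simp
    hence "f x w \<ge> 0" using antif[OF xH wH] by simp
    thus ?thesis using c1 by simp
  qed
  have fneg: "f w x \<le> 0" if "x \<in> T" "w \<in> U" for x w
  proof -
    have xH: "x \<in> HVs" and wH: "w \<in> HVs" using that TH by (auto simp: U_def)
    have "0 \<le> ereal (f x w)" using caple[OF that] capnn[of x w] by (rule order_trans[rotated])
    hence "f x w \<ge> 0" by simp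
    thus ?thesis using antif[OF xH wH] by simp
  qed
  define S where "S = (\<Sum>w\<in>U. \<Sum>x\<in>HVs. f w x)"
  have finT: "finite T" and finU: "finite U" using fin TH by (auto simp: U_def intro: finite_subset)
  have HVsplit: "HVs = T \<union> U" "T \<inter> U = {}" using TH by (auto simp: U_def)
  have S1: "S = (\<Sum>w\<in>U. \<Sum>x\<in>T. f w x) + (\<Sum>w\<in>U. \<Sum>x\<in>U. f w x)"
    unfolding S_def HVsplit(1) using finT finU HVsplit(2)
    by (simp add: sum.union_disjoint sum.distrib)
  have UH: "U \<subseteq> HVs" by (auto simp: U_def)
  have S2: "(\<Sum>w\<in>U. \<Sum>x\<in>U. f w x) = 0"
  proof -
    have "(\<Sum>w\<in>U. \<Sum>x\<in>U. f w x) = (\<Sum>x\<in>U. \<Sum>w\<in>U. f w x)" by (rule sum.swap)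
    also have "\<dots> = (\<Sum>x\<in>U. \<Sum>w\<in>U. - f x w)"
      using UH by (intro sum.cong refl) (auto intro: antif)
    also have "\<dots> = - (\<Sum>x\<in>U. \<Sum>w\<in>U. f x w)" by (simp add: sum_negf)
    finally show ?thesis by simp
  qed
  have S3: "(\<Sum>w\<in>U. \<Sum>x\<in>T. f w x) \<le> 0"
    using fneg by (intro sum_nonpos) auto
  show False
  proof (cases "Src \<in> T")
    case True
    have "(\<Sum>w\<in>U. \<Sum>x\<in>T. f w x) < 0"
    proof (rule sum_neg_aux[OF finU vU])
      show "\<forall>w\<in>U. (\<Sum>x\<in>T. f w x) \<le> 0" using fneg by (auto intro: sum_nonpos)
      show "(\<Sum>x\<in>T. f (VN v) x) < 0"
      proof (rule sum_neg_aux[OF finT True])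
        show "\<forall>x\<in>T. f (VN v) x \<le> 0" using fneg vU by auto
        have "ereal (real (clique_deg adj V h v)) \<le> ereal (f Src (VN v))"
          using caple[OF True vU] vV by simp
        hence "f Src (VN v) \<ge> 1" using degv by simp
        thus "f (VN v) Src < 0" using antif[OF SrcH vH] by simp
      qed
    qed
    moreover have "S = 0"
      unfolding S_def using SnkH True by (intro sum.neutral) (auto simp: U_def T_def intro: consf)
    ultimately show False using S1 S2 by simp
  next
    case False
    hence SrcU: "Src \<in> U" using SrcH by (auto simp: U_def)
    have "S = (\<Sum>x\<in>HVs. f Src x) + (\<Sum>w\<in>U - {Src}. \<Sum>x\<in>HVs. f w x)"
      unfolding S_def using finU SrcU by (simp add: sum.remove)
    also have "(\<Sum>w\<in>U - {Src}. \<Sum>x\<in>HVs. f w x) = 0"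
      using SnkH by (intro sum.neutral) (auto simp: U_def T_def intro: consf)
    also have "(\<Sum>x\<in>HVs. f Src x) = (\<Sum>x\<in>VN ` V. f Src x)"
    proof (rule sum.mono_neutral_right[OF fin])
      show "VN ` V \<subseteq> HVs" by (auto simp: HVs_def HV_def)
      show "\<forall>x\<in>HVs - VN ` V. f Src x = 0"
      proof
        fix x assume x: "x \<in> HVs - VN ` V"
        hence xH: "x \<in> HVs" by simp
        have c1: "cap adj V h Src x = 0" using x by (cases x) auto
        have c2: "cap adj V h x Src = 0" by (cases x) auto
        have "f Src x \<le> 0" using capf[OF SrcH xH] c1 by simp
        moreover have "f x Src \<le> 0" using capf[OF xH SrcH] c2 by simp
        ultimately show "f Src x = 0" using antif[OF SrcH xH] by simp
      qed
    qed
    finally have Sv: "S = flow_value adj V h f" by (simp add: flow_value_def)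
    define eps where "eps = min 1 (real h * rho_star adj V h)"
    have epos: "eps > 0" using rpos assms(4) by (simp add: eps_def)
    define g where "g = (\<lambda>u w. if (u, w) = (Src, VN v) \<or> (u, w) = (VN v, Snk) then eps
        else if (u, w) = (VN v, Src) \<or> (u, w) = (Snk, VN v) then - eps else 0)"
    have gflow: "is_flow adj V h g"
      unfolding is_flow_def
    proof (intro conjI ballI)
      fix u w
      show "ereal (g u w) \<le> cap adj V h u w"
      proof -
        consider "(u, w) = (Src, VN v)" | "(u, w) = (VN v, Snk)" | "g u w \<le> 0"
          using epos by (cases "(u, w) = (Src, VN v) \<or> (u, w) = (VN v, Snk)") (auto simp: g_def)
        thus ?thesis
        proof cases
          case 1
          have "eps \<le> real (clique_deg adj V h v)" using degv by (simp add: eps_def min_le_iff_disj)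
          thus ?thesis using 1 vV by (auto simp: g_def)
        next
          case 2
          have "eps \<le> real h * rho_star adj V h" by (simp add: eps_def)
          thus ?thesis using 2 vV by (auto simp: g_def)
        next
          case 3
          hence "ereal (g u w) \<le> 0" by simp
          thus ?thesis using capnn[of u w] by (rule order_trans)
        qed
      qed
      show "g w u = - g u w" by (auto simp: g_def)
    next
      fix u assume u: "u \<in> HV adj V h - {Src, Snk}"
      show "(\<Sum>w\<in>HV adj V h. g u w) = 0"
      proof (cases "u = VN v")
        case True
        have "(\<Sum>w\<in>HV adj V h. g u w) =
              (\<Sum>w\<in>HV adj V h. (if w = Snk then eps else 0) + (if w = Src then - eps else 0))"
          using True by (intro sum.cong refl) (auto simp: g_def)
        also have "\<dots> = 0" using fin SrcH SnkH by (simp add: sum.distrib HVs_def)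
        finally show ?thesis .
      next
        case False
        thus ?thesis using u by (intro sum.neutral) (auto simp: g_def)
      qed
    qed
    have "flow_value adj V h g = (\<Sum>x\<in>VN ` V. if x = VN v then eps else 0)"
      unfolding flow_value_def by (intro sum.cong refl) (auto simp: g_def)
    also have "\<dots> = eps" using assms(1) vV by simp
    finally have "flow_value adj V h g = eps" .
    hence "eps \<le> S" using maxf[OF gflow] Sv by simp
    thus False using S1 S2 S3 epos by simp
  qed
qed

end
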